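(* Let $(X,G)$ be a minimal continuous action and $m\in\mathbb{N}$, $m\geq 2$. If $(X,G)$ is almost $m$-equicontinuous, then $(X,G)$ is $m$-equicontinuous.
   Context: $G$ is a locally compact topological group acting continuously on a compact metric space $(X,d)$; minimal means every orbit is dense. A point $x\in X$ is an $m$-equicontinuity point if for every $\varepsilon>0$ there is $\delta>0$ such that for any $x_1,\dots,x_m$ in the open ball $B_\delta(x)$ and every $g\in G$ there exist $i\neq j$ in $\{1,\dots,m\}$ with $d(gx_i,gx_j)<\varepsilon$; $E^m(X,G)$ is the set of such points. $(X,G)$ is $m$-equicontinuous if $E^m(X,G)=X$, and almost $m$-equicontinuous if $E^m(X,G)$ is residual in $X$. *)

theory Defs
  imports "HOL-Analysis.Analysis"
begin

text \<open>A topological group G is modelled as a type of class topological_group_add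
(group operation written additively, not necessarily commutative).\<close>

definition continuous_action :: "('g::topological_group_add \<Rightarrow> 'x::metric_space \<Rightarrow> 'x) \<Rightarrow> 'x set \<Rightarrow> bool" where
  "continuous_action act X \<longleftrightarrow>
     (\<forall>g x. x \<in> X \<longrightarrow> act g x \<in> X) \<and>
     (\<forall>x\<in>X. act 0 x = x) \<and>
     (\<forall>g h x. x \<in> X \<longrightarrow> act (g + h) x = act g (act h x)) \<and>
     continuous_on (UNIV \<times> X) (\<lambda>(g, x). act g x)"

definition minimal_action :: "('g \<Rightarrow> 'x::metric_space \<Rightarrow> 'x) \<Rightarrow> 'x set \<Rightarrow> bool" where
  "minimal_action act X \<longleftrightarrow> (\<forall>x\<in>X. X \<subseteq> closure (range (\<lambda>g. act g x)))"

text \<open>m-equicontinuity points (points x_1..x_m are indexed by 0..m-1).\<close>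
definition m_equicontinuity_points :: "nat \<Rightarrow> ('g \<Rightarrow> 'x::metric_space \<Rightarrow> 'x) \<Rightarrow> 'x set \<Rightarrow> 'x set" where
  "m_equicontinuity_points m act X =
     {x \<in> X. \<forall>\<epsilon>>0. \<exists>\<delta>>0. \<forall>xs :: nat \<Rightarrow> 'x.
        (\<forall>i<m. xs i \<in> X \<inter> ball x \<delta>) \<longrightarrow>
        (\<forall>g. \<exists>i<m. \<exists>j<m. i \<noteq> j \<and> dist (act g (xs i)) (act g (xs j)) < \<epsilon>)}"

definition residual_in :: "'x::metric_space set \<Rightarrow> 'x set \<Rightarrow> bool" where
  "residual_in E X \<longleftrightarrow>
     (\<exists>U :: nat \<Rightarrow> 'x set. (\<forall>n. openin (top_of_set X) (U n) \<and> X \<subseteq> closure (U n))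
         \<and> (\<Inter>n. U n) \<subseteq> E)"

definition m_equicontinuous :: "nat \<Rightarrow> ('g \<Rightarrow> 'x::metric_space \<Rightarrow> 'x) \<Rightarrow> 'x set \<Rightarrow> bool" where
  "m_equicontinuous m act X \<longleftrightarrow> m_equicontinuity_points m act X = X"

definition almost_m_equicontinuous :: "nat \<Rightarrow> ('g \<Rightarrow> 'x::metric_space \<Rightarrow> 'x) \<Rightarrow> 'x set \<Rightarrow> bool" where
  "almost_m_equicontinuous m act X \<longleftrightarrow> residual_in (m_equicontinuity_points m act X) X"

end

theory Submission
  imports Defs
begin

lemma residual_nonempty:
  fixes X :: "'x::metric_space set"
  assumes "compact X" "X \<noteq> {}" "residual_in E X"
  shows "E \<noteq> {}"
proof -
  obtain U :: "nat \<Rightarrow> 'x set" where U: "\<And>n. openin (top_of_set X) (U n) \<and> X \<subseteq> closure (U n)"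
    and sub: "(\<Inter>n. U n) \<subseteq> E"
    using assms(3) unfolding residual_in_def by blast
  have lc: "locally_compact_space (top_of_set X) \<and> regular_space (top_of_set X)"
    using assms(1) by (simp add: Hausdorff_space_subtopology
    compact_Hausdorff_imp_regular_space compact_imp_locally_compact_space
    compact_space_subtopology)
  have cl: "(top_of_set X) closure_of T = topspace (top_of_set X)" if TU: "T \<in> range U" for T
  proof -
    obtain n where T: "T = U n" using TU by blast
    have "U n \<subseteq> X" using U[of n] openin_imp_subset by blast
    then show ?thesis using U[of n] T by (simp add: closure_of_subtopology_open inf.order_iff)
  qed
  have "(top_of_set X) closure_of \<Inter>(range U) = topspace (top_of_set X)"
    by (rule Baire_category) (use lc cl U in auto)
  then have "\<Inter>(range U) \<noteq> {}" using assms(2) by auto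
  then show ?thesis using sub by auto
qed

theorem proposition4p5:
  fixes act :: "'g::topological_group_add \<Rightarrow> 'x::metric_space \<Rightarrow> 'x"
    and X :: "'x set" and m :: nat
  assumes "locally_compact_space (euclidean :: 'g topology)"
    and "compact X"
    and "continuous_action act X"
    and "minimal_action act X"
    and "m \<ge> 2"
    and "almost_m_equicontinuous m act X"
  shows "m_equicontinuous m act X"
proof (cases "X = {}")
  case True
  then show ?thesis unfolding m_equicontinuous_def m_equicontinuity_points_def by auto
next
  case False
  let ?E = "m_equicontinuity_points m act X"
  have "?E \<noteq> {}" using residual_nonempty[OF assms(2) False] assms(6)
    unfolding almost_m_equicontinuous_def by blast
  then obtain y where yE: "y \<in> ?E" by blast
  have yX: "y \<in> X" using yE unfolding m_equicontinuity_points_def by blast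
  have inX: "\<And>g x. x \<in> X \<Longrightarrow> act g x \<in> X"
    and comp: "\<And>g h x. x \<in> X \<Longrightarrow> act (g + h) x = act g (act h x)"
    and cont: "continuous_on (UNIV \<times> X) (\<lambda>(g, x). act g x)"
    using assms(3) unfolding continuous_action_def by auto
  have conth: "continuous_on X (act h)" for h
  proof -
    have "continuous_on X (\<lambda>x. (h, x))" by (intro continuous_intros)
    moreover have "(\<lambda>x. (h, x)) ` X \<subseteq> UNIV \<times> X" by auto
    ultimately have "continuous_on X ((\<lambda>(g, x). act g x) \<circ> (\<lambda>x. (h, x)))"
      using continuous_on_compose continuous_on_subset cont by blast
    then show ?thesis by (simp add: o_def)
  qed
  have "x \<in> ?E" if xX: "x \<in> X" for x
    unfolding m_equicontinuity_points_def
  proof (intro CollectI conjI xX allI impI)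
    fix \<epsilon> :: real assume "\<epsilon> > 0"
    then obtain \<delta> where d: "\<delta> > 0" and dP: "\<And>xs. (\<forall>i<m. xs i \<in> X \<inter> ball y \<delta>) \<Longrightarrow>
        (\<forall>g. \<exists>i<m. \<exists>j<m. i \<noteq> j \<and> dist (act g (xs i)) (act g (xs j)) < \<epsilon>)"
      using yE unfolding m_equicontinuity_points_def by blast
    have "y \<in> closure (range (\<lambda>g. act g x))" using assms(4) xX yX
      unfolding minimal_action_def by blast
    then have "\<forall>e>0. \<exists>z\<in>range (\<lambda>g. act g x). dist z y < e"
      unfolding closure_approachable by blast
    then have "\<exists>z\<in>range (\<lambda>g. act g x). dist z y < \<delta>/2"
      using d by (meson half_gt_zero)
    then obtain h where h: "dist (act h x) y < \<delta>/2" by blast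
    obtain \<delta>' where d': "\<delta>' > 0" and d'P: "\<And>x'. x' \<in> X \<Longrightarrow> dist x' x < \<delta>' \<Longrightarrow>
        dist (act h x') (act h x) < \<delta>/2"
      using conth[of h] xX d unfolding continuous_on_iff by (metis half_gt_zero)
    show "\<exists>\<delta>>0. \<forall>xs. (\<forall>i<m. xs i \<in> X \<inter> ball x \<delta>) \<longrightarrow>
        (\<forall>g. \<exists>i<m. \<exists>j<m. i \<noteq> j \<and> dist (act g (xs i)) (act g (xs j)) < \<epsilon>)"
    proof (intro exI[of _ \<delta>'] conjI d' allI impI)
      fix xs g assume xs: "\<forall>i<m. xs i \<in> X \<inter> ball x \<delta>'"
      have "\<forall>i<m. act h (xs i) \<in> X \<inter> ball y \<delta>"
      proof (intro allI impI)
        fix i assume "i < m"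
        then have xi: "xs i \<in> X" "dist (xs i) x < \<delta>'" using xs by (auto simp: dist_commute)
        have "dist (act h (xs i)) (act h x) < \<delta>/2" using d'P xi by blast
        then have "dist y (act h (xs i)) < \<delta>" using h dist_triangle_half_r[of "act h x" y "\<delta>" ]
          by (smt (verit) dist_commute dist_triangle)
        then show "act h (xs i) \<in> X \<inter> ball y \<delta>" using inX xi by auto
      qed
      then obtain i j where ij: "i < m" "j < m" "i \<noteq> j"
        "dist (act (g - h) (act h (xs i))) (act (g - h) (act h (xs j))) < \<epsilon>"
        using dP[of "\<lambda>i. act h (xs i)"] by blast
      have "act (g - h) (act h (xs k)) = act g (xs k)" if "k < m" for k
        using comp[of "xs k" "g - h" h] xs that by simp
      then show "\<exists>i<m. \<exists>j<m. i \<noteq> j \<and> dist (act g (xs i)) (act g (xs j)) < \<epsilon>"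
        using ij by metis
    qed
  qed
  moreover have "?E \<subseteq> X" unfolding m_equicontinuity_points_def by blast
  ultimately show ?thesis unfolding m_equicontinuous_def by blast
qed

end
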